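(* Let $N\in\mathbb{N}$. Let $$\mathcal{B}(N)=\{(q_1,q_2)\in\mathbb{Z}^2\mid 3q_1^2+3q_2^2-2q_1-q_2=N\},$$ let $\mathcal{U}(12N+5)=\{(x,y)\in\mathbb{Z}^2\mid x^2+y^2=12N+5\}$, and let $\varphi:\mathcal{B}(N)\to\mathcal{U}(12N+5)$ be the (well-defined) map $\varphi(q_1,q_2)=(6q_1-2,\,6q_2-1)$. Let the dihedral group $D_8=\langle r,s\mid r^4=s^2=(rs)^2=1\rangle$ act on $\mathcal{U}(12N+5)$ by $r(x,y)=(-y,x)$ and $s(x,y)=(y,x)$. Then: (1) the action of $D_8$ on $\mathcal{U}(12N+5)$ is free; (2) $\varphi(\mathcal{B}(N))$ is a complete set of representatives of the $D_8$-orbits of $\mathcal{U}(12N+5)$.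
   Context: The expression $3q_1^2+3q_2^2-2q_1-q_2$ is the $\Lambda_0$-atomic length of the element $q=\sqrt2q_1\varepsilon_1+\sqrt2q_2\varepsilon_2$ of the lattice $M$ in affine type $D_3^{(2)}$, so $\mathcal{B}(N)$ parametrises the affine Grassmannian elements of type $D_3^{(2)}$ of atomic length $N$. *)

theory Defs
  imports Main
begin

definition Bset :: "nat \<Rightarrow> (int \<times> int) set" where
  "Bset N = {(q1, q2). 3*q1^2 + 3*q2^2 - 2*q1 - q2 = int N}"

definition Uset :: "int \<Rightarrow> (int \<times> int) set" where
  "Uset m = {(x, y). x^2 + y^2 = m}"

definition phi :: "int \<times> int \<Rightarrow> int \<times> int" where
  "phi q = (6 * fst q - 2, 6 * snd q - 1)"

definition rot :: "int \<times> int \<Rightarrow> int \<times> int" where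
  "rot p = (- snd p, fst p)"

definition refl :: "int \<times> int \<Rightarrow> int \<times> int" where
  "refl p = (snd p, fst p)"

text \<open>The group D8 generated by r and s, acting on Z^2 (the action is faithful on Z^2).\<close>
inductive_set D8 :: "(int \<times> int \<Rightarrow> int \<times> int) set" where
  D8_id: "id \<in> D8"
| D8_r: "g \<in> D8 \<Longrightarrow> rot \<circ> g \<in> D8"
| D8_s: "g \<in> D8 \<Longrightarrow> refl \<circ> g \<in> D8"

end

theory Submission
  imports Defs
begin

lemma sq_mod: "(x::int)^2 mod 12 = (x mod 6)^2 mod 12"
proof -
  define q r where "q = x div 6" and "r = x mod 6"
  have x: "x = 6*q + r" unfolding q_def r_def by simp
  have "x^2 = r^2 + (3 * q^2 + q * r) * 12"
    unfolding x by (simp add: power2_eq_square algebra_simps)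
  then show ?thesis by (simp only: mod_mult_self1 r_def)
qed
lemma D8_cases:
  assumes "g \<in> D8"
  shows "g = id \<or> g = (\<lambda>p. (- snd p, fst p)) \<or> g = (\<lambda>p. (- fst p, - snd p))
    \<or> g = (\<lambda>p. (snd p, - fst p)) \<or> g = (\<lambda>p. (snd p, fst p)) \<or> g = (\<lambda>p. (- fst p, snd p))
    \<or> g = (\<lambda>p. (- snd p, - fst p)) \<or> g = (\<lambda>p. (fst p, - snd p))"
  using assms
proof (induction rule: D8.induct)
  case D8_id
  then show ?case by simp
next
  case (D8_r g)
  then show ?case by (elim disjE; simp add: fun_eq_iff rot_def)
next
  case (D8_s g)
  then show ?case by (elim disjE; simp add: fun_eq_iff refl_def)
qed
lemma residues:
  assumes "(x::int)^2 + y^2 = 12 * int N + 5"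
  shows "(x mod 6 \<in> {1,5} \<and> y mod 6 \<in> {2,4}) \<or> (x mod 6 \<in> {2,4} \<and> y mod 6 \<in> {1,5})"
proof -
  have "(x^2 + y^2) mod 12 = 5" using assms by simp
  then have h: "((x mod 6)^2 + (y mod 6)^2) mod 12 = 5"
    by (metis mod_add_eq sq_mod)
  have a: "x mod 6 \<in> {0,1,2,3,4,5}" by auto
  have b: "y mod 6 \<in> {0,1,2,3,4,5}" by auto
  from a b h show ?thesis by (auto simp: power2_eq_square)
qed

definition C :: "int \<Rightarrow> int \<Rightarrow> int \<times> int" where
 "C x y = (if even x then (if x mod 3 = 1 then x else -x, if y mod 3 = 2 then y else -y)
           else (if y mod 3 = 1 then y else -y, if x mod 3 = 2 then x else -x))"
lemma neg4: "((-t::int) mod 6 = 4) = (t mod 6 = 2)" by presburger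
lemma neg5: "((-t::int) mod 6 = 5) = (t mod 6 = 1)" by presburger
lemma r4: "(t::int) mod 6 = 4 \<Longrightarrow> even t \<and> t mod 3 = 1" by presburger
lemma r2: "(t::int) mod 6 = 2 \<Longrightarrow> even t \<and> t mod 3 = 2" by presburger
lemma r5: "(t::int) mod 6 = 5 \<Longrightarrow> odd t \<and> t mod 3 = 2" by presburger
lemma r1: "(t::int) mod 6 = 1 \<Longrightarrow> odd t \<and> t mod 3 = 1" by presburger
lemma key:
  assumes "g \<in> D8" "g (x, y) = v" "fst v mod 6 = 4" "snd v mod 6 = 5"
  shows "v = C x y"
proof -
  have a: "fst v mod 6 = 4" "snd v mod 6 = 5" using assms(3,4) .
  from D8_cases[OF assms(1)] show ?thesis
  proof (elim disjE)
    assume "g = id" then have v: "v = (x, y)" using assms(2) by simp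
    show ?thesis using a r4[of x] r5[of y] unfolding v C_def by simp
  next
    assume "g = (\<lambda>p. (- snd p, fst p))" then have v: "v = (-y, x)" using assms(2) by simp
    show ?thesis using a r2[of y] r5[of x] unfolding v C_def by (simp add: neg4)
  next
    assume "g = (\<lambda>p. (- fst p, - snd p))" then have v: "v = (-x, -y)" using assms(2) by simp
    show ?thesis using a r2[of x] r1[of y] unfolding v C_def by (simp add: neg4 neg5)
  next
    assume "g = (\<lambda>p. (snd p, - fst p))" then have v: "v = (y, -x)" using assms(2) by simp
    show ?thesis using a r4[of y] r1[of x] unfolding v C_def by (simp add: neg4 neg5)
  next
    assume "g = (\<lambda>p. (snd p, fst p))" then have v: "v = (y, x)" using assms(2) by simp
    show ?thesis using a r4[of y] r5[of x] unfolding v C_def by (simp add: neg4 neg5)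
  next
    assume "g = (\<lambda>p. (- fst p, snd p))" then have v: "v = (-x, y)" using assms(2) by simp
    show ?thesis using a r2[of x] r5[of y] unfolding v C_def by (simp add: neg4 neg5)
  next
    assume "g = (\<lambda>p. (- snd p, - fst p))" then have v: "v = (-y, -x)" using assms(2) by simp
    show ?thesis using a r2[of y] r1[of x] unfolding v C_def by (simp add: neg4 neg5)
  next
    assume "g = (\<lambda>p. (fst p, - snd p))" then have v: "v = (x, -y)" using assms(2) by simp
    show ?thesis using a r4[of x] r1[of y] unfolding v C_def by (simp add: neg4 neg5)
  qed
qed
lemma phi_char:
  "v \<in> phi ` Bset N \<longleftrightarrow> v \<in> Uset (12 * int N + 5) \<and> fst v mod 6 = 4 \<and> snd v mod 6 = 5"
proof
  assume "v \<in> phi ` Bset N"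
  then obtain q1 q2 where q: "v = phi (q1, q2)" "3*q1^2 + 3*q2^2 - 2*q1 - q2 = int N"
    by (auto simp: Bset_def)
  have "(6*q1-2)^2 + (6*q2-1)^2 = 12 * (3*q1^2 + 3*q2^2 - 2*q1 - q2) + 5"
    by (simp add: power2_eq_square algebra_simps)
  then show "v \<in> Uset (12 * int N + 5) \<and> fst v mod 6 = 4 \<and> snd v mod 6 = 5"
    using q by (auto simp: phi_def Uset_def) presburger+
next
  assume h: "v \<in> Uset (12 * int N + 5) \<and> fst v mod 6 = 4 \<and> snd v mod 6 = 5"
  obtain x y where v: "v = (x, y)" by fastforce
  define q1 where "q1 = (x + 2) div 6"
  define q2 where "q2 = (y + 1) div 6"
  have x4: "x mod 6 = 4" and y5: "y mod 6 = 5" using h v by auto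
  have x: "x = 6*q1 - 2" using x4 unfolding q1_def by presburger
  have y: "y = 6*q2 - 1" using y5 unfolding q2_def by presburger
  have e: "(6*q1-2)^2 + (6*q2-1)^2 = 12 * (3*q1^2 + 3*q2^2 - 2*q1 - q2) + 5"
    by (simp add: power2_eq_square algebra_simps)
  have "x^2 + y^2 = 12 * int N + 5" using h v by (simp add: Uset_def)
  then have "3*q1^2 + 3*q2^2 - 2*q1 - q2 = int N" using e x y by simp
  then have "(q1, q2) \<in> Bset N" by (simp add: Bset_def)
  moreover have "v = phi (q1, q2)" using x y v by (simp add: phi_def)
  ultimately show "v \<in> phi ` Bset N" by blast
qed


theorem theorem8p17:
  fixes N :: nat
  shows "phi ` Bset N \<subseteq> Uset (12 * int N + 5)
    \<and> (\<forall>g\<in>D8. \<forall>u\<in>Uset (12 * int N + 5). g u = u \<longrightarrow> g = id)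
    \<and> (\<forall>u\<in>Uset (12 * int N + 5). \<exists>!v. v \<in> phi ` Bset N \<and> (\<exists>g\<in>D8. g u = v))"
proof (intro conjI ballI impI)
  show "phi ` Bset N \<subseteq> Uset (12 * int N + 5)" using phi_char by blast
next
  fix g u assume g: "g \<in> D8" and u: "u \<in> Uset (12 * int N + 5)" and gu: "g u = u"
  obtain x y where uxy: "u = (x, y)" by fastforce
  have r: "(x mod 6 \<in> {1,5} \<and> y mod 6 \<in> {2,4}) \<or> (x mod 6 \<in> {2,4} \<and> y mod 6 \<in> {1,5})"
    using residues u uxy by (simp add: Uset_def)
  have n1: "x \<noteq> 0" using r by auto
  have n2: "y \<noteq> 0" using r by auto
  have n3: "x \<noteq> y" using r by auto
  have r': "(x mod 6 = 1 \<or> x mod 6 = 5) \<and> (y mod 6 = 2 \<or> y mod 6 = 4) \<or> (x mod 6 = 2 \<or> x mod 6 = 4) \<and> (y mod 6 = 1 \<or> y mod 6 = 5)"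
    using r by simp
  have n4: "x \<noteq> - y" using r' by presburger
  have e: "g (x, y) = (x, y)" using gu uxy by simp
  from D8_cases[OF g] show "g = id"
  proof (elim disjE)
    assume "g = id" then show ?thesis .
  qed (use e n1 n2 n3 n4 in auto)
next
  fix u assume u: "u \<in> Uset (12 * int N + 5)"
  obtain x y where uxy: "u = (x, y)" by fastforce
  have sq: "x^2 + y^2 = 12 * int N + 5" using u uxy by (simp add: Uset_def)
  have r: "(x mod 6 \<in> {1,5} \<and> y mod 6 \<in> {2,4}) \<or> (x mod 6 \<in> {2,4} \<and> y mod 6 \<in> {1,5})"
    using residues sq by blast
  have m1: "id \<in> D8" by (rule D8_id)
  have m2: "rot \<circ> id \<in> D8" by (intro D8.intros)
  have m3: "rot \<circ> (rot \<circ> id) \<in> D8" by (intro D8.intros)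
  have m4: "rot \<circ> (rot \<circ> (rot \<circ> id)) \<in> D8" by (intro D8.intros)
  have m5: "refl \<circ> id \<in> D8" by (intro D8.intros)
  have m6: "refl \<circ> (rot \<circ> id) \<in> D8" by (intro D8.intros)
  have m7: "refl \<circ> (rot \<circ> (rot \<circ> id)) \<in> D8" by (intro D8.intros)
  have m8: "refl \<circ> (rot \<circ> (rot \<circ> (rot \<circ> id))) \<in> D8" by (intro D8.intros)
  have sq2: "y^2 + x^2 = 12 * int N + 5" using sq by (simp add: add.commute)
  have ex: "\<exists>v. v \<in> phi ` Bset N \<and> (\<exists>g\<in>D8. g u = v)"
  proof -
    have "\<exists>g\<in>D8. g u \<in> Uset (12 * int N + 5) \<and> fst (g u) mod 6 = 4 \<and> snd (g u) mod 6 = 5"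
    proof -
      consider "x mod 6 = 1" "y mod 6 = 2" | "x mod 6 = 1" "y mod 6 = 4"
        | "x mod 6 = 5" "y mod 6 = 2" | "x mod 6 = 5" "y mod 6 = 4"
        | "x mod 6 = 2" "y mod 6 = 1" | "x mod 6 = 2" "y mod 6 = 5"
        | "x mod 6 = 4" "y mod 6 = 1" | "x mod 6 = 4" "y mod 6 = 5"
        using r by auto
      then show ?thesis
      proof cases
        case 1 then show ?thesis using m7
          by (intro bexI[of _ "refl \<circ> (rot \<circ> (rot \<circ> id))"]) (simp_all add: uxy rot_def refl_def neg4 neg5 Uset_def sq sq2)
      next
        case 2 then show ?thesis using m4
          by (intro bexI[of _ "rot \<circ> (rot \<circ> (rot \<circ> id))"]) (simp_all add: uxy rot_def refl_def neg4 neg5 Uset_def sq sq2)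
      next
        case 3 then show ?thesis using m2
          by (intro bexI[of _ "rot \<circ> id"]) (simp_all add: uxy rot_def refl_def neg4 neg5 Uset_def sq sq2)
      next
        case 4 then show ?thesis using m5
          by (intro bexI[of _ "refl \<circ> id"]) (simp_all add: uxy rot_def refl_def neg4 neg5 Uset_def sq sq2)
      next
        case 5 then show ?thesis using m3
          by (intro bexI[of _ "rot \<circ> (rot \<circ> id)"]) (simp_all add: uxy rot_def refl_def neg4 neg5 Uset_def sq sq2)
      next
        case 6 then show ?thesis using m8
          by (intro bexI[of _ "refl \<circ> (rot \<circ> (rot \<circ> (rot \<circ> id)))"]) (simp_all add: uxy rot_def refl_def neg4 neg5 Uset_def sq sq2)
      next
        case 7 then show ?thesis using m6
          by (intro bexI[of _ "refl \<circ> (rot \<circ> id)"]) (simp_all add: uxy rot_def refl_def neg4 neg5 Uset_def sq sq2)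
      next
        case 8 then show ?thesis using m1
          by (intro bexI[of _ id]) (simp_all add: uxy Uset_def sq)
      qed
    qed
    then show ?thesis using phi_char by blast
  qed
  have un: "v = w" if v: "v \<in> phi ` Bset N" "\<exists>g\<in>D8. g u = v"
    and w: "w \<in> phi ` Bset N" "\<exists>g\<in>D8. g u = w" for v w
  proof -
    obtain g h where g: "g \<in> D8" "g (x, y) = v" and h: "h \<in> D8" "h (x, y) = w"
      using v w uxy by blast
    have cv: "fst v mod 6 = 4" "snd v mod 6 = 5" using v phi_char by blast+
    have cw: "fst w mod 6 = 4" "snd w mod 6 = 5" using w phi_char by blast+
    show ?thesis using key[OF g cv] key[OF h cw] by simp
  qed
  from ex un show "\<exists>!v. v \<in> phi ` Bset N \<and> (\<exists>g\<in>D8. g u = v)" by blast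
qed

end
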